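(* Let $f\colon D^*\to H^3$ be a regular WCF-end of a flat front with multiplicity $m$ and ratio of Gauss maps $\alpha$, and suppose $(G,\omega)$ is a dominant pair. Then \[\mu=-\frac{1+\alpha}{1-\alpha}m-1\ (\le -1),\qquad\text{that is,}\qquad \alpha=\frac{1+\mu+m}{1+\mu-m},\] where $\mu=\mathrm{ord}_0|\omega|^2$. In particular $\mu_*=\mathrm{ord}_0|\theta|^2$ satisfies $\mu+\mu_*\ge-2$ and $\mu_*\ge-1$ (and $\mu\le -1$).
   Context: Flat front on $D^*=\{0<|z|<1\}$: $f=\mathcal{E}\mathcal{E}^*\colon D^*\to H^3=\{uu^*:u\in SL(2,\mathbb{C})\}$ with $\mathcal{E}=(E_{ij})$ a holomorphic immersion of the universal cover into $SL(2,\mathbb{C})$, $\mathcal{E}^{-1}d\mathcal{E}=\begin{pmatrix}0&\theta\\ \omega&0\end{pmatrix}$ (canonical forms), $z$ compatible with $ds^2_{1,1}=|\omega|^2+|\theta|^2$. Hyperbolic Gauss maps $G=E_{11}/E_{21}$, $G_*=E_{12}/E_{22}$. WCF-end: $ds^2_{1,1}$ complete at $0$ with finite total curvature near $0$; then $\omega=z^{\mu}\omega_1(z)dz$, $\theta=z^{\mu_*}\theta_1(z)dz$ with $\mu,\mu_*\in\mathbb{R}$, $\omega_1,\theta_1$ holomorphic and non-zero at $0$; $\mathrm{ord}_0|\omega|^2=\mu$, $\mathrm{ord}_0|\theta|^2=\mu_*$. Regular: $G,G_*$ have at most poles at $0$ (then $G(0)=G_*(0)$). Multiplicity: after an isometry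 assume $G(0)\neq\infty$; $m=\min\{\mathrm{ord}_0G',\mathrm{ord}_0G_*'\}+1$, or the ramification order of the non-constant one if one of them is constant. Ratio of Gauss maps: $\alpha=(dG_*/dG)(0)$ if $|(dG_*/dG)(0)|\le1$, else $\alpha=(dG/dG_* )(0)$; it is real, $\alpha\in[-1,1)$. The pair $(G,\omega)$ is dominant if $|(dG_*/dG)(0)|\le1$. *)

theory Defs
  imports "HOL-Complex_Analysis.Complex_Analysis"
begin

text \<open>The universal cover of the punctured disk D* = {0 < |z| < 1} is parametrised
  by the left half plane {w. Re w < 0} via z = exp w; the deck transformation is
  w \<mapsto> w + 2 pi i.\<close>

definition left_halfplane :: "complex set" where
  "left_halfplane = {w. Re w < 0}"

definition punctured_disk :: "complex set" where
  "punctured_disk = ball 0 1 - {0}"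

definition adj2 :: "complex^2^2 \<Rightarrow> complex^2^2" where
  "adj2 A = (\<chi> i j. cnj (A $ j $ i))"

definition canon_mat :: "complex \<Rightarrow> complex \<Rightarrow> complex^2^2" where
  "canon_mat om th = (\<chi> i j. if i = 1 \<and> j = 2 then th else if i = 2 \<and> j = 1 then om else 0)"

text \<open>Density rho of ds^2_{1,1} = |omega|^2 + |theta|^2 = rho^2 |dz|^2 on D*, where on
  the cover omega = om(w) dw, theta = th(w) dw and dz = z dw.\<close>
definition metric_density :: "(complex \<Rightarrow> complex) \<Rightarrow> (complex \<Rightarrow> complex) \<Rightarrow> complex \<Rightarrow> real" where
  "metric_density om th z = sqrt ((cmod (om (Ln z) / z))\<^sup>2 + (cmod (th (Ln z) / z))\<^sup>2)"

definition complete_at_zero :: "(complex \<Rightarrow> real) \<Rightarrow> bool" where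
  "complete_at_zero \<rho> \<longleftrightarrow>
     (\<forall>\<gamma> :: real \<Rightarrow> complex.
        \<gamma> ` {0..<1} \<subseteq> punctured_disk \<and>
        (\<forall>b\<in>{0<..<1}. \<gamma> piecewise_C1_differentiable_on {0..b}) \<and>
        (\<gamma> \<longlongrightarrow> 0) (at_left 1)
        \<longrightarrow> filterlim (\<lambda>b. integral {0..b} (\<lambda>t. \<rho> (\<gamma> t) * norm (vector_derivative \<gamma> (at t))))
              at_top (at_left 1))"

definition laplacian :: "(complex \<Rightarrow> real) \<Rightarrow> complex \<Rightarrow> real" where
  "laplacian u z =
     deriv (\<lambda>x. deriv (\<lambda>s. u (Complex s (Im z))) x) (Re z) +
     deriv (\<lambda>y. deriv (\<lambda>t. u (Complex (Re z) t)) y) (Im z)"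

text \<open>Finite total curvature near 0 of rho^2 |dz|^2: |K| dA = |Laplacian(log rho)| dx dy.\<close>
definition finite_total_curvature_at_zero :: "(complex \<Rightarrow> real) \<Rightarrow> bool" where
  "finite_total_curvature_at_zero \<rho> \<longleftrightarrow>
     (\<exists>r>0. (\<lambda>z. \<bar>laplacian (\<lambda>z. ln (\<rho> z)) z\<bar>) integrable_on (ball 0 r - {0}))"

text \<open>Multiplicity of a regular end (normalised so that G(0) is finite):
  min(ord_0 G', ord_0 G_*') + 1, or the ramification order ord_0 g' + 1 of the
  non-constant one g if the other is constant.\<close>
definition locally_constant_at_zero :: "(complex \<Rightarrow> complex) \<Rightarrow> bool" where
  "locally_constant_at_zero g \<longleftrightarrow> (\<forall>\<^sub>F z in at 0. deriv g z = 0)"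

definition end_multiplicity :: "(complex \<Rightarrow> complex) \<Rightarrow> (complex \<Rightarrow> complex) \<Rightarrow> int" where
  "end_multiplicity G Gs =
     (if locally_constant_at_zero G then zorder (deriv Gs) 0 + 1
      else if locally_constant_at_zero Gs then zorder (deriv G) 0 + 1
      else min (zorder (deriv G) 0) (zorder (deriv Gs) 0) + 1)"

end

theory Submission
  imports Defs
begin

lemma rep0:
  assumes "isolated_singularity_at f 0" "not_essential f 0" "\<exists>\<^sub>F w in at 0. f w \<noteq> 0"
  obtains h r where "r > 0" "h holomorphic_on cball 0 r" "h 0 \<noteq> 0"
    "\<And>w. w \<in> cball 0 r - {0} \<Longrightarrow> f w = h w * w powi (zorder f 0) \<and> h w \<noteq> 0"
  using zorder_exist[OF assms] by fastforce

lemma logderiv_lim: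
  assumes "r > 0" "h holomorphic_on cball 0 r" "h 0 \<noteq> 0"
    "\<And>w. w \<in> cball 0 r - {0} \<Longrightarrow> f w = h w * w powi k \<and> h w \<noteq> 0"
  shows "((\<lambda>z. z * deriv f z / f z) \<longlongrightarrow> of_int k) (at 0)"
proof -
  have hb: "h holomorphic_on ball 0 r" using assms(2) by (rule holomorphic_on_subset) auto
  have eq: "z * deriv f z / f z = z * deriv h z / h z + of_int k" if z: "z \<in> ball 0 r - {0}" for z
  proof -
    have hd: "(h has_field_derivative deriv h z) (at z)"
      by (rule holomorphic_derivI[OF hb]) (use z in auto)
    have "((\<lambda>w. h w * w powi k) has_field_derivative
        deriv h z * z powi k + h z * (of_int k * z powi (k - 1) * 1)) (at z)"
    proof -
      have hp: "((\<lambda>w. w powi k) has_field_derivative of_int k * z powi (k-1) * 1) (at z)"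
        by (rule DERIV_power_int[where f="\<lambda>w. w", OF DERIV_ident]) (use z in auto)
      show ?thesis by (rule DERIV_mult[OF hd hp, THEN DERIV_cong]) (simp add: algebra_simps)
    qed
    hence "(f has_field_derivative
        deriv h z * z powi k + h z * (of_int k * z powi (k - 1) * 1)) (at z)"
      by (rule has_field_derivative_transform_within_open[where S="ball 0 r - {0}"])
         (use z assms(4) in auto)
    hence "deriv f z = deriv h z * z powi k + h z * (of_int k * z powi (k - 1) * 1)"
      by (rule DERIV_imp_deriv)
    moreover have "z powi (k - 1) * z = z powi k" using z by (intro power_int_minus_mult) auto
    moreover have "z powi k \<noteq> 0" "h z \<noteq> 0" using z assms(4)[of z] by auto
    ultimately show ?thesis using assms(4)[of z] z
      by (simp add: field_simps)
  qed
  have "((\<lambda>z. z * deriv h z / h z + of_int k) \<longlongrightarrow> 0 * deriv h 0 / h 0 + of_int k) (at 0)"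
  proof -
    have "continuous_on (ball 0 r) (deriv h)"
      using hb by (intro holomorphic_on_imp_continuous_on holomorphic_deriv) auto
    hence c1: "isCont (deriv h) 0" using assms(1) by (simp add: continuous_on_eq_continuous_at)
    have "continuous_on (ball 0 r) h" using hb holomorphic_on_imp_continuous_on by blast
    hence c2: "isCont h 0" using assms(1) by (simp add: continuous_on_eq_continuous_at)
    show ?thesis using c1 c2 assms(3)
      by (intro tendsto_intros) (auto simp: isCont_def intro: tendsto_within_subset)
  qed
  hence "((\<lambda>z. z * deriv h z / h z + of_int k) \<longlongrightarrow> of_int k) (at 0)" by simp
  moreover have "\<forall>\<^sub>F z in at 0. z * deriv h z / h z + of_int k = z * deriv f z / f z"
    using assms(1) unfolding eventually_at
    by (intro exI[of _ r]) (auto simp: eq dist_norm)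
  ultimately show ?thesis by (rule Lim_transform_eventually)
qed

lemma powi_limit:
  fixes f c :: "complex \<Rightarrow> complex"
  assumes "(f \<longlongrightarrow> L) (at 0)" "\<forall>\<^sub>F z in at 0. f z = z powi e * c z" "(c \<longlongrightarrow> c0) (at 0)" "c0 \<noteq> 0"
  shows "e \<ge> 0" "e > 0 \<Longrightarrow> L = 0" "e = 0 \<Longrightarrow> L = c0"
proof -
  have z: "((\<lambda>z::complex. z) \<longlongrightarrow> 0) (at 0)" by (rule tendsto_ident_at)
  have ev0: "\<forall>\<^sub>F z in at (0::complex). z \<noteq> 0" by (simp add: eventually_at_filter)
  show "e \<ge> 0"
  proof (rule ccontr)
    assume "\<not> e \<ge> 0"
    hence ne: "nat (-e) > 0" "e = - int (nat (-e))" by auto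
    have "((\<lambda>z. f z * z ^ nat (-e)) \<longlongrightarrow> L * 0 ^ nat (-e)) (at 0)"
      by (intro tendsto_intros assms z)
    hence "((\<lambda>z. f z * z ^ nat (-e)) \<longlongrightarrow> 0) (at 0)" using ne(1) by (simp add: zero_power)
    moreover have "\<forall>\<^sub>F z in at 0. f z * z ^ nat (-e) = c z"
      using assms(2) ev0
    proof eventually_elim
      case (elim z)
      have "z powi e = inverse (z ^ nat (-e))" using ne(2) by (metis power_int_minus power_int_of_nat)
      then show ?case using elim by (simp add: field_simps)
    qed
    ultimately have "(c \<longlongrightarrow> 0) (at 0)" by (rule Lim_transform_eventually)
    with assms(3,4) show False by (metis at_neq_bot tendsto_unique)
  qed
  show "L = 0" if "e > 0"
  proof -
    have "((\<lambda>z. z ^ nat e * c z) \<longlongrightarrow> 0 ^ nat e * c0) (at 0)"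
      by (intro tendsto_intros assms z)
    hence "((\<lambda>z. z ^ nat e * c z) \<longlongrightarrow> 0) (at 0)" using that by (simp add: zero_power)
    moreover have "\<forall>\<^sub>F z in at 0. z ^ nat e * c z = f z"
      using assms(2) by eventually_elim (use that in \<open>simp add: power_int_def\<close>)
    ultimately have "(f \<longlongrightarrow> 0) (at 0)" by (rule Lim_transform_eventually)
    with assms(1) show ?thesis by (metis at_neq_bot tendsto_unique)
  qed
  show "L = c0" if "e = 0"
  proof -
    have "\<forall>\<^sub>F z in at 0. c z = f z"
      using assms(2) by eventually_elim (use that in simp)
    hence "(f \<longlongrightarrow> c0) (at 0)" using Lim_transform_eventually[OF assms(3)] by blast
    with assms(1) show ?thesis by (metis at_neq_bot tendsto_unique)
  qed
qed

lemma canon_entries: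
  "(A ** canon_mat om th) $ 1 $ 1 = A $ 1 $ 2 * om"
  "(A ** canon_mat om th) $ 2 $ 1 = A $ 2 $ 2 * om"
  "(A ** canon_mat om th) $ 1 $ 2 = A $ 1 $ 1 * th"
  "(A ** canon_mat om th) $ 2 $ 2 = A $ 2 $ 1 * th"
  by (simp_all add: matrix_matrix_mult_def canon_mat_def sum_2)

lemma nonzero_denom:
  fixes a b F :: "complex \<Rightarrow> complex"
  assumes "(b has_field_derivative b') (at w0)" "b w0 = 0" "b' \<noteq> 0" "a w0 \<noteq> 0"
    "isCont a w0" "isCont (\<lambda>v. F (exp v)) w0" "\<forall>\<^sub>F v in at w0. F (exp v) = a v / b v"
  shows False
proof -
  have "((\<lambda>y. (b y - b w0) / (y - w0)) \<longlongrightarrow> b') (at w0)"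
    using assms(1) by (simp add: has_field_derivative_iff)
  hence "\<forall>\<^sub>F y in at w0. (b y - b w0) / (y - w0) \<noteq> 0"
    using assms(3) by (rule tendsto_imp_eventually_ne)
  hence ev: "\<forall>\<^sub>F y in at w0. b y \<noteq> 0" by eventually_elim (use assms(2) in auto)
  have "\<forall>\<^sub>F v in at w0. F (exp v) * b v = a v"
    using ev assms(7) by eventually_elim auto
  moreover have "((\<lambda>v. F (exp v) * b v) \<longlongrightarrow> F (exp w0) * b w0) (at w0)"
    using assms(6) DERIV_isCont[OF assms(1)]
    by (intro tendsto_intros) (auto simp: isCont_def)
  ultimately have "(a \<longlongrightarrow> 0) (at w0)" using assms(2)
    using Lim_transform_eventually by fastforce
  moreover have "(a \<longlongrightarrow> a w0) (at w0)" using assms(5) by (simp add: isCont_def)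
  ultimately have "a w0 = 0" by (metis at_neq_bot tendsto_unique)
  with assms(4) show False by simp
qed

lemma alg1:
  fixes z g e f D x o1 o1' g2 mu :: complex
  assumes "z \<noteq> 0" "g \<noteq> 0" "e \<noteq> 0" "o1 \<noteq> 0" "x \<noteq> 0" "D * e * f = 1"
    "z * g * e^2 = - (x * o1 * z)"
    "z * g * e^2 + z * (g2 * z) * e^2 + z * g * (2 * e * (f * (x * o1 * z)))
       = - (mu * x * o1 * z + x * (o1' * z) * z + x * o1 * z)"
  shows "z * g / D = (z * g2 / g - z * o1' / o1 - mu) / 2"
proof -
  define r where "r = z * o1' / o1"
  have D0: "D \<noteq> 0" using assms(6) by auto
  have D: "1 / D = e * f"
    by (metis D0 assms(6) mult.assoc mult.commute nonzero_eq_divide_eq)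
  have h7: "x * o1 * z = - (z * g * e^2)" using assms(7) by simp
  have h8: "z * g * e^2 + z * (g2 * z) * e^2 + z * g * (2 * e * (f * (- (z * g * e^2))))
       = - (mu * (- (z * g * e^2)) + x * (o1' * z) * z + (- (z * g * e^2)))"
  proof -
    have m: "mu * x * o1 * z = mu * (- (z * g * e^2))" using h7 by (metis mult.assoc)
    show ?thesis using assms(8) by (simp only: h7 m)
  qed
  have hx: "x * (o1' * z) * z = - (z * g * e^2) * r"
    unfolding r_def h7[symmetric] using assms(4) by (simp add: field_simps)
  have "z * g * e^2 * (z * g2 / g - 2 * z * g * (e * f) - mu - r) = 0"
    using h8 unfolding hx using assms(2) apply (simp add: field_simps power2_eq_square)
    apply (drule arg_cong[where f="\<lambda>t. g * t"]) by (simp add: algebra_simps)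
  hence "z * g2 / g - 2 * z * g * (e * f) - mu - r = 0" using assms(1-3) by simp
  hence "z * g * (1/D) = (z * g2 / g - r - mu) / 2" unfolding D by (simp add: field_simps)
  thus ?thesis by (simp add: r_def)
qed

lemma alg2:
  fixes z g e f D x o1 o1' g2 mu :: complex
  assumes "z \<noteq> 0" "g \<noteq> 0" "f \<noteq> 0" "o1 \<noteq> 0" "x \<noteq> 0" "D * e * f = 1"
    "z * g * f^2 = x * o1 * z"
    "z * g * f^2 + z * (g2 * z) * f^2 + z * g * (2 * f * (e * (x * o1 * z)))
       = mu * x * o1 * z + x * (o1' * z) * z + x * o1 * z"
  shows "z * g / D = (mu + z * o1' / o1 - z * g2 / g) / 2"
proof -
  define r where "r = z * o1' / o1"
  have D0: "D \<noteq> 0" using assms(6) by auto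
  have D: "1 / D = e * f"
    by (metis D0 assms(6) mult.assoc mult.commute nonzero_eq_divide_eq)
  have h7: "x * o1 * z = z * g * f^2" using assms(7) by metis
  have h8: "z * g * f^2 + z * (g2 * z) * f^2 + z * g * (2 * f * (e * (z * g * f^2)))
       = mu * (z * g * f^2) + x * (o1' * z) * z + z * g * f^2"
  proof -
    have m: "mu * x * o1 * z = mu * (z * g * f^2)" using h7 by (metis mult.assoc)
    show ?thesis using assms(8) by (simp only: h7 m)
  qed
  have hx: "x * (o1' * z) * z = (z * g * f^2) * r"
    unfolding r_def h7[symmetric] using assms(4) by (simp add: field_simps)
  have "z * g * f^2 * (z * g2 / g + 2 * z * g * (e * f) - mu - r) = 0"
    using h8 unfolding hx using assms(2) apply (simp add: field_simps power2_eq_square)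
    apply (drule arg_cong[where f="\<lambda>t. g * t"]) by (simp add: algebra_simps)
  hence "z * g2 / g + 2 * z * g * (e * f) - mu - r = 0" using assms(1-3) by simp
  hence "z * g * (1/D) = (mu + r - z * g2 / g) / 2" unfolding D by (simp add: field_simps)
  thus ?thesis by (simp add: r_def)
qed

lemma density_bound:
  fixes om th om1 th1 :: "complex \<Rightarrow> complex" and \<mu> \<mu>s B1 B2 x :: real
  assumes "\<mu> \<ge> 0" "\<mu>s \<ge> 0"
    and om_form: "\<And>w. w \<in> left_halfplane \<Longrightarrow> om w = exp (of_real \<mu> * w) * om1 (exp w) * exp w"
    and th_form: "\<And>w. w \<in> left_halfplane \<Longrightarrow> th w = exp (of_real \<mu>s * w) * th1 (exp w) * exp w"
    and B: "cmod (om1 (of_real x)) \<le> B1" "cmod (th1 (of_real x)) \<le> B2"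
    and x: "0 < x" "x < 1"
  shows "metric_density om th (of_real x) \<le> sqrt (B1^2 + B2^2)"
proof -
  have L: "Ln (complex_of_real x) = of_real (ln x)" using x by (simp add: Ln_of_real)
  have inL: "of_real (ln x) \<in> left_halfplane" using x by (simp add: left_halfplane_def)
  have e: "exp (of_real (ln x)) = (of_real x :: complex)" by (metis exp_ln exp_of_real x(1))
  have "om (of_real (ln x)) / of_real x = exp (of_real \<mu> * of_real (ln x)) * om1 (of_real x)"
    using om_form[OF inL] x by (simp add: e)
  hence a: "cmod (om (Ln (of_real x)) / of_real x) = exp (\<mu> * ln x) * cmod (om1 (of_real x))"
    unfolding L by (simp add: norm_mult flip: of_real_mult exp_of_real)
  have "th (of_real (ln x)) / of_real x = exp (of_real \<mu>s * of_real (ln x)) * th1 (of_real x)"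
    using th_form[OF inL] x by (simp add: e)
  hence b: "cmod (th (Ln (of_real x)) / of_real x) = exp (\<mu>s * ln x) * cmod (th1 (of_real x))"
    unfolding L by (simp add: norm_mult flip: of_real_mult exp_of_real)
  have lnx: "ln x \<le> 0" using x by simp
  have e1: "exp (\<mu> * ln x) \<le> 1" "exp (\<mu>s * ln x) \<le> 1"
    using assms(1,2) lnx by (simp_all add: mult_nonneg_nonpos)
  have a': "cmod (om (Ln (of_real x)) / of_real x) \<le> B1"
    unfolding a using e1(1) B(1)
    by (meson exp_ge_zero mult_left_le_one_le norm_ge_zero order.trans)
  have b': "cmod (th (Ln (of_real x)) / of_real x) \<le> B2"
    unfolding b using e1(2) B(2)
    by (meson exp_ge_zero mult_left_le_one_le norm_ge_zero order.trans)
  show ?thesis unfolding metric_density_def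
    by (intro real_sqrt_le_mono add_mono power_mono a' b') auto
qed

lemma incomplete:
  fixes om th om1 th1 :: "complex \<Rightarrow> complex" and \<mu> \<mu>s :: real
  assumes "\<mu> \<ge> 0" "\<mu>s \<ge> 0"
    and om1_holo: "om1 holomorphic_on ball 0 1" and th1_holo: "th1 holomorphic_on ball 0 1"
    and om_form: "\<And>w. w \<in> left_halfplane \<Longrightarrow> om w = exp (of_real \<mu> * w) * om1 (exp w) * exp w"
    and th_form: "\<And>w. w \<in> left_halfplane \<Longrightarrow> th w = exp (of_real \<mu>s * w) * th1 (exp w) * exp w"
  shows "\<not> complete_at_zero (metric_density om th)"
proof
  assume c: "complete_at_zero (metric_density om th)"
  have sub: "cball (0::complex) (1/2) \<subseteq> ball 0 1" by auto
  have "compact (om1 ` cball 0 (1/2))"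
    using om1_holo sub by (intro compact_continuous_image holomorphic_on_imp_continuous_on)
       (auto intro: holomorphic_on_subset)
  then obtain B1 where B1: "\<And>z. z \<in> cball 0 (1/2) \<Longrightarrow> cmod (om1 z) \<le> B1"
    using compact_imp_bounded bounded_iff by (metis image_eqI)
  have "compact (th1 ` cball 0 (1/2))"
    using th1_holo sub by (intro compact_continuous_image holomorphic_on_imp_continuous_on)
       (auto intro: holomorphic_on_subset)
  then obtain B2 where B2: "\<And>z. z \<in> cball 0 (1/2) \<Longrightarrow> cmod (th1 z) \<le> B2"
    using compact_imp_bounded bounded_iff by (metis image_eqI)
  define M where "M = sqrt (B1^2 + B2^2)"
  define \<gamma> where "\<gamma> = (\<lambda>t::real. complex_of_real ((1 - t) / 2))"
  have vd: "(\<gamma> has_vector_derivative (- 1/2)) (at t)" for t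
    unfolding \<gamma>_def by (auto intro!: derivative_eq_intros simp: has_vector_derivative_def
        has_derivative_of_real fun_eq_iff scaleR_conv_of_real)
  hence vd': "vector_derivative \<gamma> (at t) = - 1/2" for t
    using vector_derivative_at by blast
  have "\<gamma> ` {0..<1} \<subseteq> punctured_disk"
  proof -
    have "cmod (1 - complex_of_real t) < 2" if "0 \<le> t" "t < 1" for t
    proof -
      have "1 - complex_of_real t = complex_of_real (1 - t)" by simp
      hence "cmod (1 - complex_of_real t) = \<bar>1 - t\<bar>" by (simp only: norm_of_real)
      thus ?thesis using that by simp
    qed
    thus ?thesis unfolding \<gamma>_def punctured_disk_def by auto
  qed
  moreover have "\<gamma> piecewise_C1_differentiable_on {0..b}" for b
  proof -
    have "\<gamma> C1_differentiable_on {0..b}"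
      unfolding C1_differentiable_on_eq using vd' vd
      by (auto simp: differentiable_def has_vector_derivative_def)
    thus ?thesis by (rule C1_differentiable_imp_piecewise)
  qed
  moreover have "(\<gamma> \<longlongrightarrow> 0) (at_left 1)"
  proof -
    have "(\<gamma> \<longlongrightarrow> complex_of_real ((1 - 1) / 2)) (at_left 1)"
      unfolding \<gamma>_def by (intro tendsto_intros) auto
    thus ?thesis by simp
  qed
  ultimately have fl: "filterlim (\<lambda>b. integral {0..b}
      (\<lambda>t. metric_density om th (\<gamma> t) * norm (vector_derivative \<gamma> (at t)))) at_top (at_left 1)"
    using c unfolding complete_at_zero_def by blast
  have nrm: "cmod (1 - complex_of_real t) = 1 - t" if "0 \<le> t" "t < 1" for t
  proof -
    have "1 - complex_of_real t = complex_of_real (1 - t)" by simp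
    hence "cmod (1 - complex_of_real t) = \<bar>1 - t\<bar>" by (simp only: norm_of_real)
    thus ?thesis using that by simp
  qed
  have bnd: "metric_density om th (\<gamma> t) \<le> M" if "0 \<le> t" "t < 1" for t
    unfolding \<gamma>_def M_def
    by (rule density_bound[OF assms(1,2) om_form th_form B1 B2]) (use that nrm in auto)
  have M0: "M \<ge> 0" unfolding M_def by simp
  have ib: "integral {0..b} (\<lambda>t. metric_density om th (\<gamma> t) * norm (vector_derivative \<gamma> (at t))) \<le> M"
    if "0 < b" "b < 1" for b
  proof -
    have eqf: "(\<lambda>t. metric_density om th (\<gamma> t) * norm (vector_derivative \<gamma> (at t)))
        = (\<lambda>t. metric_density om th (\<gamma> t) / 2)"
      by (simp add: vd')
    show ?thesis
    proof (cases "(\<lambda>t. metric_density om th (\<gamma> t) / 2) integrable_on {0..b}")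
      case True
      have "integral {0..b} (\<lambda>t. metric_density om th (\<gamma> t) / 2) \<le> integral {0..b} (\<lambda>t. M / 2)"
        by (rule integral_le[OF True]) (use bnd that in auto)
      also have "\<dots> = b * (M/2)" using that by simp
      also have "\<dots> \<le> M" using that M0 by (simp add: field_simps) (smt (verit) mult_right_le_one_le)
      finally show ?thesis unfolding eqf .
    next
      case False
      then show ?thesis unfolding eqf using M0 by (simp add: not_integrable_integral)
    qed
  qed
  have "\<forall>\<^sub>F b in at_left 1. integral {0..b}
      (\<lambda>t. metric_density om th (\<gamma> t) * norm (vector_derivative \<gamma> (at t))) \<ge> M + 1"
    using fl by (simp add: filterlim_at_top)
  moreover have "\<forall>\<^sub>F b in at_left (1::real). 0 < b \<and> b < 1"
    by (rule eventually_at_leftI[of 0]) auto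
  ultimately have "\<forall>\<^sub>F b in at_left (1::real). False"
    by eventually_elim (use ib in force)
  thus False by (simp add: trivial_limit_at_left_real)
qed

lemma algA:
  fixes gz z e f qq G a11 a12 :: complex
  assumes "gz * z * e + f * qq * G = a12 * qq" "G * e = a11" "a11 * f - a12 * e = 1"
  shows "z * gz * e^2 = - qq"
proof -
  have "z * gz * e^2 = e * (gz * z * e)" by (simp add: power2_eq_square algebra_simps)
  also have "gz * z * e = a12 * qq - f * qq * G" using assms(1) by (simp add: eq_diff_eq)
  hence "e * (gz * z * e) = e * (a12 * qq - f * qq * G)" by simp
  also have "\<dots> = qq * (a12 * e - f * (G * e))" by (simp add: algebra_simps)
  also have "\<dots> = - qq" using assms(2,3) by (simp add: algebra_simps)
  finally show ?thesis .
qed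
lemma algB:
  fixes gz z e f t Gs a11 a12 :: complex
  assumes "gz * z * f + e * t * Gs = a11 * t" "Gs * f = a12" "a11 * f - a12 * e = 1"
  shows "z * gz * f^2 = t"
proof -
  have "z * gz * f^2 = f * (gz * z * f)" by (simp add: power2_eq_square algebra_simps)
  also have "gz * z * f = a11 * t - e * t * Gs" using assms(1) by (simp add: eq_diff_eq)
  hence "f * (gz * z * f) = f * (a11 * t - e * t * Gs)" by simp
  also have "\<dots> = t * (a11 * f - e * (Gs * f))" by (simp add: algebra_simps)
  also have "\<dots> = t" using assms(2,3) by (simp add: algebra_simps)
  finally show ?thesis .
qed
lemma algC:
  fixes G Gs e f a11 a12 :: complex
  assumes "G * e = a11" "Gs * f = a12" "a11 * f - a12 * e = 1"
  shows "(G - Gs) * e * f = 1"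
proof -
  have "(G - Gs) * e * f = (G * e) * f - (Gs * f) * e" by (simp add: algebra_simps)
  thus ?thesis using assms by simp
qed

lemma partA:
  fixes E :: "complex \<Rightarrow> complex^2^2"
    and om th :: "complex \<Rightarrow> complex"
    and G Gs :: "complex \<Rightarrow> complex"
    and om1 th1 :: "complex \<Rightarrow> complex"
    and \<mu> \<mu>s :: real
  assumes E_canonical: "\<And>w i j. w \<in> left_halfplane \<Longrightarrow>
          ((\<lambda>v. E v $ i $ j) has_field_derivative ((E w ** canon_mat (om w) (th w)) $ i $ j)) (at w)"
    and E_SL2: "\<And>w. w \<in> left_halfplane \<Longrightarrow> det (E w) = 1"
    and G_def: "\<And>w. w \<in> left_halfplane \<Longrightarrow> G (exp w) = E w $ 1 $ 1 / E w $ 2 $ 1"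
    and Gs_def: "\<And>w. w \<in> left_halfplane \<Longrightarrow> Gs (exp w) = E w $ 1 $ 2 / E w $ 2 $ 2"
    and om1_holo: "om1 holomorphic_on ball 0 1" and om1_0: "om1 0 \<noteq> 0"
    and th1_holo: "th1 holomorphic_on ball 0 1" and th1_0: "th1 0 \<noteq> 0"
    and om_form: "\<And>w. w \<in> left_halfplane \<Longrightarrow> om w = exp (of_real \<mu> * w) * om1 (exp w) * exp w"
    and th_form: "\<And>w. w \<in> left_halfplane \<Longrightarrow> th w = exp (of_real \<mu>s * w) * th1 (exp w) * exp w"
    and G_iso: "isolated_singularity_at G 0"
    and Gs_iso: "isolated_singularity_at Gs 0"
  shows "\<exists>r>0. r \<le> 1 \<and> G holomorphic_on ball 0 r - {0} \<and> Gs holomorphic_on ball 0 r - {0} \<and>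
     (\<forall>z\<in>ball 0 r - {0}. deriv G z \<noteq> 0 \<and> deriv Gs z \<noteq> 0 \<and> G z - Gs z \<noteq> 0 \<and>
        om1 z \<noteq> 0 \<and> th1 z \<noteq> 0 \<and>
        z * deriv G z / (G z - Gs z) =
          (z * deriv (deriv G) z / deriv G z - z * deriv om1 z / om1 z - of_real \<mu>) / 2 \<and>
        z * deriv Gs z / (G z - Gs z) =
          (of_real \<mu>s + z * deriv th1 z / th1 z - z * deriv (deriv Gs) z / deriv Gs z) / 2)"
proof -
  obtain r0 where r0: "r0 > 0" "G analytic_on ball 0 r0 - {0}"
    using G_iso unfolding isolated_singularity_at_def by auto
  obtain r0' where r0': "r0' > 0" "Gs analytic_on ball 0 r0' - {0}"
    using Gs_iso unfolding isolated_singularity_at_def by auto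
  have "isCont om1 0" using om1_holo
    by (meson centre_in_ball continuous_on_eq_continuous_at holomorphic_on_imp_continuous_on open_ball zero_less_one)
  then obtain r1 where r1: "r1 > 0" "\<And>y. dist 0 y < r1 \<Longrightarrow> om1 y \<noteq> 0"
    using continuous_at_avoid[of 0 om1 0] om1_0 by blast
  have "isCont th1 0" using th1_holo
    by (meson centre_in_ball continuous_on_eq_continuous_at holomorphic_on_imp_continuous_on open_ball zero_less_one)
  then obtain r2 where r2: "r2 > 0" "\<And>y. dist 0 y < r2 \<Longrightarrow> th1 y \<noteq> 0"
    using continuous_at_avoid[of 0 th1 0] th1_0 by blast
  define r where "r = min (min r0 r0') (min (min r1 r2) 1)"
  have r: "r > 0" "r \<le> 1" "r \<le> r0" "r \<le> r0'" "r \<le> r1" "r \<le> r2"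
    using r0 r0' r1 r2 unfolding r_def by auto
  define B where "B = ball (0::complex) r - {0}"
  have Bopen: "open B" unfolding B_def by auto
  have "B \<subseteq> ball 0 r0 - {0}" "B \<subseteq> ball 0 r0' - {0}" unfolding B_def using r by auto
  hence Gh: "G holomorphic_on B" and Gsh: "Gs holomorphic_on B"
    using analytic_on_subset[OF r0(2)] analytic_on_subset[OF r0'(2)] analytic_imp_holomorphic by blast+
  have Gdh: "deriv G holomorphic_on B" using Gh Bopen by (rule holomorphic_deriv)
  have Gsdh: "deriv Gs holomorphic_on B" using Gsh Bopen by (rule holomorphic_deriv)
  have om1nz: "om1 z \<noteq> 0" "th1 z \<noteq> 0" if "z \<in> B" for z
    using that r r1 r2 unfolding B_def by (auto simp: dist_norm)
  have om1d: "(om1 has_field_derivative deriv om1 z) (at z)" if "z \<in> B" for z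
    by (rule holomorphic_derivI[OF om1_holo]) (use that r in \<open>auto simp: B_def\<close>)
  have th1d: "(th1 has_field_derivative deriv th1 z) (at z)" if "z \<in> B" for z
    by (rule holomorphic_derivI[OF th1_holo]) (use that r in \<open>auto simp: B_def\<close>)
  define W where "W = {w. Re w < ln r}"
  have Wopen: "open W" unfolding W_def by (rule open_halfspace_Re_lt)
  have WL: "w \<in> left_halfplane" if "w \<in> W" for w
  proof -
    have "ln r \<le> 0" using r by simp
    thus ?thesis using that unfolding W_def left_halfplane_def by auto
  qed
  have WB: "exp w \<in> B" if "w \<in> W" for w
  proof -
    have "norm (exp w) = exp (Re w)" by (simp add: norm_exp_eq_Re)
    also have "\<dots> < exp (ln r)" using that unfolding W_def by simp
    also have "\<dots> = r" using r by simp
    finally show ?thesis unfolding B_def by simp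
  qed
  have d11: "((\<lambda>v. E v $ 1 $ 1) has_field_derivative E w $ 1 $ 2 * om w) (at w)"
   and d21: "((\<lambda>v. E v $ 2 $ 1) has_field_derivative E w $ 2 $ 2 * om w) (at w)"
   and d12: "((\<lambda>v. E v $ 1 $ 2) has_field_derivative E w $ 1 $ 1 * th w) (at w)"
   and d22: "((\<lambda>v. E v $ 2 $ 2) has_field_derivative E w $ 2 $ 1 * th w) (at w)"
    if "w \<in> left_halfplane" for w
    using E_canonical[OF that, of 1 1] E_canonical[OF that, of 2 1] E_canonical[OF that, of 1 2]
      E_canonical[OF that, of 2 2] by (simp_all add: canon_entries)
  have det: "E w $ 1 $ 1 * E w $ 2 $ 2 - E w $ 1 $ 2 * E w $ 2 $ 1 = 1" if "w \<in> left_halfplane" for w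
    using E_SL2[OF that] by (simp add: det_2)
  have Lopen: "open left_halfplane" unfolding left_halfplane_def by (rule open_halfspace_Re_lt)
  have omnz: "om w \<noteq> 0" "th w \<noteq> 0" if "w \<in> W" for w
    using om_form[OF WL[OF that]] th_form[OF WL[OF that]] om1nz[OF WB[OF that]] by auto
  have Gc: "isCont (\<lambda>v. G (exp v)) w" if "w \<in> W" for w
  proof -
    have "isCont G (exp w)"
      using Gh Bopen WB[OF that] holomorphic_on_imp_continuous_on continuous_on_eq_continuous_at by blast
    thus ?thesis by (intro isCont_o2[OF isCont_exp])
  qed
  have Gsc: "isCont (\<lambda>v. Gs (exp v)) w" if "w \<in> W" for w
  proof -
    have "isCont Gs (exp w)"
      using Gsh Bopen WB[OF that] holomorphic_on_imp_continuous_on continuous_on_eq_continuous_at by blast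
    thus ?thesis by (intro isCont_o2[OF isCont_exp])
  qed
  have E21nz: "E w $ 2 $ 1 \<noteq> 0" if "w \<in> W" for w
  proof
    assume z: "E w $ 2 $ 1 = 0"
    have wL: "w \<in> left_halfplane" using WL that .
    have "E w $ 1 $ 1 * E w $ 2 $ 2 = 1" using det[OF wL] z by simp
    hence nz: "E w $ 1 $ 1 \<noteq> 0" "E w $ 2 $ 2 \<noteq> 0" by auto
    show False
    proof (rule nonzero_denom[OF d21[OF wL] z])
      show "E w $ 2 $ 2 * om w \<noteq> 0" using nz omnz[OF that] by simp
      show "E w $ 1 $ 1 \<noteq> 0" by fact
      show "isCont (\<lambda>v. E v $ 1 $ 1) w" using d11[OF wL] by (rule DERIV_isCont)
      show "isCont (\<lambda>v. G (exp v)) w" using Gc that .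
      show "\<forall>\<^sub>F v in at w. G (exp v) = E v $ 1 $ 1 / E v $ 2 $ 1"
        using eventually_at_in_open'[OF Lopen wL] by eventually_elim (rule G_def)
    qed
  qed
  have E22nz: "E w $ 2 $ 2 \<noteq> 0" if "w \<in> W" for w
  proof
    assume z: "E w $ 2 $ 2 = 0"
    have wL: "w \<in> left_halfplane" using WL that .
    have "E w $ 1 $ 2 * E w $ 2 $ 1 = -1" using det[OF wL] z by (simp add: minus_equation_iff[of "E w $ 1 $ 2 * E w $ 2 $ 1"])
    hence nz: "E w $ 1 $ 2 \<noteq> 0" "E w $ 2 $ 1 \<noteq> 0" by auto
    show False
    proof (rule nonzero_denom[OF d22[OF wL] z])
      show "E w $ 2 $ 1 * th w \<noteq> 0" using nz omnz[OF that] by simp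
      show "E w $ 1 $ 2 \<noteq> 0" by fact
      show "isCont (\<lambda>v. E v $ 1 $ 2) w" using d12[OF wL] by (rule DERIV_isCont)
      show "isCont (\<lambda>v. Gs (exp v)) w" using Gsc that .
      show "\<forall>\<^sub>F v in at w. Gs (exp v) = E v $ 1 $ 2 / E v $ 2 $ 2"
        using eventually_at_in_open'[OF Lopen wL] by eventually_elim (rule Gs_def)
    qed
  qed
  have first: "exp w * deriv G (exp w) * (E w $ 2 $ 1)^2 = - om w \<and>
      exp w * deriv Gs (exp w) * (E w $ 2 $ 2)^2 = th w \<and>
      (G (exp w) - Gs (exp w)) * E w $ 2 $ 1 * E w $ 2 $ 2 = 1" if wW: "w \<in> W" for w
  proof -
    define z where "z = exp w"
    have wL: "w \<in> left_halfplane" using WL wW .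
    have zB: "z \<in> B" using WB wW unfolding z_def .
    define e where "e = E w $ 2 $ 1"
    define f where "f = E w $ 2 $ 2"
    have Gd: "(G has_field_derivative deriv G z) (at z)" by (rule holomorphic_derivI[OF Gh Bopen zB])
    have Gsd: "(Gs has_field_derivative deriv Gs z) (at z)" by (rule holomorphic_derivI[OF Gsh Bopen zB])
    have cG: "((\<lambda>v. G (exp v)) has_field_derivative deriv G z * exp w) (at w)"
      unfolding z_def by (rule DERIV_chain2[OF Gd[unfolded z_def] DERIV_exp])
    have cGs: "((\<lambda>v. Gs (exp v)) has_field_derivative deriv Gs z * exp w) (at w)"
      unfolding z_def by (rule DERIV_chain2[OF Gsd[unfolded z_def] DERIV_exp])
    have GE: "G (exp v) * E v $ 2 $ 1 = E v $ 1 $ 1" if "v \<in> W" for v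
      using G_def[OF WL[OF that]] E21nz[OF that] by simp
    have GsE: "Gs (exp v) * E v $ 2 $ 2 = E v $ 1 $ 2" if "v \<in> W" for v
      using Gs_def[OF WL[OF that]] E22nz[OF that] by simp
    have "((\<lambda>v. G (exp v) * E v $ 2 $ 1) has_field_derivative
        deriv G z * exp w * E w $ 2 $ 1 + E w $ 2 $ 2 * om w * G (exp w)) (at w)"
      by (rule DERIV_mult[OF cG d21[OF wL]])
    hence "((\<lambda>v. E v $ 1 $ 1) has_field_derivative
        deriv G z * exp w * E w $ 2 $ 1 + E w $ 2 $ 2 * om w * G (exp w)) (at w)"
      by (rule has_field_derivative_transform_within_open[OF _ Wopen wW]) (rule GE)
    hence eq1: "deriv G z * z * e + f * om w * G z = E w $ 1 $ 2 * om w"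
      using DERIV_unique[OF _ d11[OF wL]] unfolding e_def f_def z_def by blast
    have "((\<lambda>v. Gs (exp v) * E v $ 2 $ 2) has_field_derivative
        deriv Gs z * exp w * E w $ 2 $ 2 + E w $ 2 $ 1 * th w * Gs (exp w)) (at w)"
      by (rule DERIV_mult[OF cGs d22[OF wL]])
    hence "((\<lambda>v. E v $ 1 $ 2) has_field_derivative
        deriv Gs z * exp w * E w $ 2 $ 2 + E w $ 2 $ 1 * th w * Gs (exp w)) (at w)"
      by (rule has_field_derivative_transform_within_open[OF _ Wopen wW]) (rule GsE)
    hence eq2: "deriv Gs z * z * f + e * th w * Gs z = E w $ 1 $ 1 * th w"
      using DERIV_unique[OF _ d12[OF wL]] unfolding e_def f_def z_def by blast
    have detw: "E w $ 1 $ 1 * f - E w $ 1 $ 2 * e = 1" using det[OF wL] unfolding e_def f_def by simp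
    have A1: "z * deriv G z * e^2 = - om w"
      by (rule algA[OF eq1 _ detw]) (use GE[OF wW] in \<open>simp add: e_def z_def\<close>)
    have A2: "z * deriv Gs z * f^2 = th w"
      by (rule algB[OF eq2 _ detw]) (use GsE[OF wW] in \<open>simp add: f_def z_def\<close>)
    have A3: "(G z - Gs z) * e * f = 1"
      by (rule algC[OF _ _ detw]) (use GE[OF wW] GsE[OF wW] in \<open>simp_all add: e_def f_def z_def\<close>)
    show ?thesis using A1 A2 A3 unfolding z_def e_def f_def by (simp add: mult.assoc)
  qed
  have key: "deriv G (exp w) \<noteq> 0 \<and> deriv Gs (exp w) \<noteq> 0 \<and> G (exp w) - Gs (exp w) \<noteq> 0 \<and>
        exp w * deriv G (exp w) / (G (exp w) - Gs (exp w)) =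
          (exp w * deriv (deriv G) (exp w) / deriv G (exp w) - exp w * deriv om1 (exp w) / om1 (exp w) - of_real \<mu>) / 2 \<and>
        exp w * deriv Gs (exp w) / (G (exp w) - Gs (exp w)) =
          (of_real \<mu>s + exp w * deriv th1 (exp w) / th1 (exp w) - exp w * deriv (deriv Gs) (exp w) / deriv Gs (exp w)) / 2"
    if wW: "w \<in> W" for w
  proof -
    define z where "z = exp w"
    have wL: "w \<in> left_halfplane" using WL wW .
    have zB: "z \<in> B" using WB wW unfolding z_def .
    have z0: "z \<noteq> 0" unfolding z_def by simp
    define e where "e = E w $ 2 $ 1"
    define f where "f = E w $ 2 $ 2"
    define x where "x = exp (of_real \<mu> * w)"
    define y where "y = exp (of_real \<mu>s * w)"
    have e0: "e \<noteq> 0" unfolding e_def using E21nz wW .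
    have f0: "f \<noteq> 0" unfolding f_def using E22nz wW .
    have Gd: "(G has_field_derivative deriv G z) (at z)" by (rule holomorphic_derivI[OF Gh Bopen zB])
    have Gsd: "(Gs has_field_derivative deriv Gs z) (at z)" by (rule holomorphic_derivI[OF Gsh Bopen zB])
    have Gdd: "(deriv G has_field_derivative deriv (deriv G) z) (at z)" by (rule holomorphic_derivI[OF Gdh Bopen zB])
    have Gsdd: "(deriv Gs has_field_derivative deriv (deriv Gs) z) (at z)" by (rule holomorphic_derivI[OF Gsdh Bopen zB])
    have cG: "((\<lambda>v. G (exp v)) has_field_derivative deriv G z * exp w) (at w)"
      unfolding z_def by (rule DERIV_chain2[OF Gd[unfolded z_def] DERIV_exp])
    have cGs: "((\<lambda>v. Gs (exp v)) has_field_derivative deriv Gs z * exp w) (at w)"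
      unfolding z_def by (rule DERIV_chain2[OF Gsd[unfolded z_def] DERIV_exp])
    have cGd: "((\<lambda>v. deriv G (exp v)) has_field_derivative deriv (deriv G) z * exp w) (at w)"
      unfolding z_def by (rule DERIV_chain2[OF Gdd[unfolded z_def] DERIV_exp])
    have cGsd: "((\<lambda>v. deriv Gs (exp v)) has_field_derivative deriv (deriv Gs) z * exp w) (at w)"
      unfolding z_def by (rule DERIV_chain2[OF Gsdd[unfolded z_def] DERIV_exp])
    have com1: "((\<lambda>v. om1 (exp v)) has_field_derivative deriv om1 z * exp w) (at w)"
      unfolding z_def by (rule DERIV_chain2[OF om1d[OF zB, unfolded z_def] DERIV_exp])
    have cth1: "((\<lambda>v. th1 (exp v)) has_field_derivative deriv th1 z * exp w) (at w)"
      unfolding z_def by (rule DERIV_chain2[OF th1d[OF zB, unfolded z_def] DERIV_exp])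
    have A1: "z * deriv G z * e^2 = - om w" and A2: "z * deriv Gs z * f^2 = th w"
      and A3: "(G z - Gs z) * e * f = 1"
      using first[OF wW] unfolding z_def e_def f_def by (auto simp: mult.assoc)
    have omw: "om w = x * om1 z * z" unfolding x_def z_def using om_form[OF wL] .
    have thw: "th w = y * th1 z * z" unfolding y_def z_def using th_form[OF wL] .
    have x0: "x \<noteq> 0" "y \<noteq> 0" unfolding x_def y_def by auto
    have g0: "deriv G z \<noteq> 0" using A1 omnz[OF wW] by auto
    have gs0: "deriv Gs z \<noteq> 0" using A2 omnz[OF wW] by auto
    have D0: "G z - Gs z \<noteq> 0" using A3 by auto
    have dP: "((\<lambda>v. exp v * deriv G (exp v) * (E v $ 2 $ 1)^2) has_field_derivative
       z * deriv G z * e^2 + z * (deriv (deriv G) z * z) * e^2 + z * deriv G z * (2 * e * (f * (x * om1 z * z)))) (at w)"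
    proof -
      have h1: "((\<lambda>v. exp v * deriv G (exp v)) has_field_derivative
          exp w * deriv G (exp w) + deriv (deriv G) z * exp w * exp w) (at w)"
        by (rule DERIV_mult[OF DERIV_exp cGd])
      have h2: "((\<lambda>v. (E v $ 2 $ 1)^2) has_field_derivative of_nat 2 * ((E w $ 2 $ 2 * om w) * (E w $ 2 $ 1)^(2 - Suc 0))) (at w)"
        by (rule DERIV_power[OF d21[OF wL]])
      show ?thesis
        by (rule DERIV_cong[OF DERIV_mult[OF h1 h2]])
           (simp add: z_def e_def f_def omw[unfolded z_def] algebra_simps power2_eq_square)
    qed
    have dQ: "((\<lambda>v. - (exp (of_real \<mu> * v) * om1 (exp v) * exp v)) has_field_derivative
       - (of_real \<mu> * x * om1 z * z + x * (deriv om1 z * z) * z + x * om1 z * z)) (at w)"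
    proof -
      have hx: "((\<lambda>v. exp (of_real \<mu> * v)) has_field_derivative x * of_real \<mu>) (at w)"
        unfolding x_def by (auto intro!: derivative_eq_intros)
      show ?thesis
        by (rule DERIV_cong[OF DERIV_minus[OF DERIV_mult[OF DERIV_mult[OF hx com1] DERIV_exp]]])
           (simp add: z_def x_def algebra_simps)
    qed
    have "((\<lambda>v. - (exp (of_real \<mu> * v) * om1 (exp v) * exp v)) has_field_derivative
       z * deriv G z * e^2 + z * (deriv (deriv G) z * z) * e^2 + z * deriv G z * (2 * e * (f * (x * om1 z * z)))) (at w)"
    proof (rule has_field_derivative_transform_within_open[OF dP Wopen wW])
      fix v assume v: "v \<in> W"
      show "exp v * deriv G (exp v) * (E v $ 2 $ 1)^2 = - (exp (of_real \<mu> * v) * om1 (exp v) * exp v)"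
        using first[OF v] om_form[OF WL[OF v]] by simp
    qed
    hence H8: "z * deriv G z * e^2 + z * (deriv (deriv G) z * z) * e^2 + z * deriv G z * (2 * e * (f * (x * om1 z * z)))
       = - (of_real \<mu> * x * om1 z * z + x * (deriv om1 z * z) * z + x * om1 z * z)"
      using DERIV_unique[OF _ dQ] by blast
    have Q1: "z * deriv G z / (G z - Gs z) =
          (z * deriv (deriv G) z / deriv G z - z * deriv om1 z / om1 z - of_real \<mu>) / 2"
      by (rule alg1[OF z0 g0 e0 om1nz(1)[OF zB] x0(1) A3 _ H8]) (use A1 omw in simp)
    have dPs: "((\<lambda>v. exp v * deriv Gs (exp v) * (E v $ 2 $ 2)^2) has_field_derivative
       z * deriv Gs z * f^2 + z * (deriv (deriv Gs) z * z) * f^2 + z * deriv Gs z * (2 * f * (e * (y * th1 z * z)))) (at w)"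
    proof -
      have h1: "((\<lambda>v. exp v * deriv Gs (exp v)) has_field_derivative
          exp w * deriv Gs (exp w) + deriv (deriv Gs) z * exp w * exp w) (at w)"
        by (rule DERIV_mult[OF DERIV_exp cGsd])
      have h2: "((\<lambda>v. (E v $ 2 $ 2)^2) has_field_derivative of_nat 2 * ((E w $ 2 $ 1 * th w) * (E w $ 2 $ 2)^(2 - Suc 0))) (at w)"
        by (rule DERIV_power[OF d22[OF wL]])
      show ?thesis
        by (rule DERIV_cong[OF DERIV_mult[OF h1 h2]])
           (simp add: z_def e_def f_def thw[unfolded z_def] algebra_simps power2_eq_square)
    qed
    have dQs: "((\<lambda>v. exp (of_real \<mu>s * v) * th1 (exp v) * exp v) has_field_derivative
       of_real \<mu>s * y * th1 z * z + y * (deriv th1 z * z) * z + y * th1 z * z) (at w)"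
    proof -
      have hy: "((\<lambda>v. exp (of_real \<mu>s * v)) has_field_derivative y * of_real \<mu>s) (at w)"
        unfolding y_def by (auto intro!: derivative_eq_intros)
      show ?thesis
        by (rule DERIV_cong[OF DERIV_mult[OF DERIV_mult[OF hy cth1] DERIV_exp]])
           (simp add: z_def y_def algebra_simps)
    qed
    have "((\<lambda>v. exp (of_real \<mu>s * v) * th1 (exp v) * exp v) has_field_derivative
       z * deriv Gs z * f^2 + z * (deriv (deriv Gs) z * z) * f^2 + z * deriv Gs z * (2 * f * (e * (y * th1 z * z)))) (at w)"
    proof (rule has_field_derivative_transform_within_open[OF dPs Wopen wW])
      fix v assume v: "v \<in> W"
      show "exp v * deriv Gs (exp v) * (E v $ 2 $ 2)^2 = exp (of_real \<mu>s * v) * th1 (exp v) * exp v"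
        using first[OF v] th_form[OF WL[OF v]] by simp
    qed
    hence H8s: "z * deriv Gs z * f^2 + z * (deriv (deriv Gs) z * z) * f^2 + z * deriv Gs z * (2 * f * (e * (y * th1 z * z)))
       = of_real \<mu>s * y * th1 z * z + y * (deriv th1 z * z) * z + y * th1 z * z"
      using DERIV_unique[OF _ dQs] by blast
    have Q2: "z * deriv Gs z / (G z - Gs z) =
          (of_real \<mu>s + z * deriv th1 z / th1 z - z * deriv (deriv Gs) z / deriv Gs z) / 2"
      by (rule alg2[OF z0 gs0 f0 om1nz(2)[OF zB] x0(2) A3 _ H8s]) (use A2 thw in simp)
    show ?thesis using g0 gs0 D0 Q1 Q2 unfolding z_def by blast
  qed
  show ?thesis
  proof (intro exI[of _ r] conjI ballI)
    show "r > 0" "r \<le> 1" using r by auto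
    show "G holomorphic_on ball 0 r - {0}" "Gs holomorphic_on ball 0 r - {0}"
      using Gh Gsh unfolding B_def by auto
    fix z :: complex assume z: "z \<in> ball 0 r - {0}"
    hence zB: "z \<in> B" unfolding B_def .
    have z0: "z \<noteq> 0" using z by auto
    have "Re (Ln z) < ln r" using z z0 r by (simp add: ln_less_cancel_iff)
    hence wW: "Ln z \<in> W" unfolding W_def by simp
    note k = key[OF wW, unfolded exp_Ln[OF z0]]
    show "deriv G z \<noteq> 0" "deriv Gs z \<noteq> 0" "G z - Gs z \<noteq> 0" using k by auto
    show "om1 z \<noteq> 0" "th1 z \<noteq> 0" using om1nz[OF zB] by auto
    show "z * deriv G z / (G z - Gs z) =
          (z * deriv (deriv G) z / deriv G z - z * deriv om1 z / om1 z - of_real \<mu>) / 2"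
      using k by blast
    show "z * deriv Gs z / (G z - Gs z) =
          (of_real \<mu>s + z * deriv th1 z / th1 z - z * deriv (deriv Gs) z / deriv Gs z) / 2"
      using k by blast
  qed
qed

lemma final_arith:
  fixes \<mu> \<mu>s :: real and \<alpha> :: complex and m ns :: int
  assumes m1: "m \<ge> 1" and a1: "cmod \<alpha> \<le> 1" and an1: "\<alpha> \<noteq> 1"
    and mu: "complex_of_real \<mu> = of_int (m - 1) - 2 * of_int m / (1 - \<alpha>)"
    and mus: "complex_of_real \<mu>s = of_int ns + 2 * \<alpha> * of_int m / (1 - \<alpha>)"
    and ns: "ns \<ge> m - 1" and ns2: "\<alpha> \<noteq> 0 \<Longrightarrow> ns = m - 1"
  shows "complex_of_real \<mu> = - (1 + \<alpha>) / (1 - \<alpha>) * of_int m - 1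
         \<and> \<alpha> = complex_of_real ((1 + \<mu> + m) / (1 + \<mu> - m))
         \<and> \<mu> \<le> -1 \<and> \<mu> + \<mu>s \<ge> -2 \<and> \<mu>s \<ge> -1"
proof -
  define c where "c = real_of_int (m - 1) - \<mu>"
  have b0: "1 - \<alpha> \<noteq> 0" using an1 by simp
  have m0: "(of_int m :: complex) \<noteq> 0" using m1 by simp
  have "2 * of_int m / (1 - \<alpha>) = complex_of_real c"
    unfolding c_def using mu by simp
  hence c0: "c \<noteq> 0" using b0 m0 by auto
  have "1 - \<alpha> = 2 * of_int m / complex_of_real c"
    using \<open>2 * of_int m / (1 - \<alpha>) = complex_of_real c\<close> b0 c0 by (auto simp: field_simps)
  hence "\<alpha> = complex_of_real (1 - 2 * m / c)" by (simp add: algebra_simps)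
  then obtain a where a: "\<alpha> = complex_of_real a" by blast
  have "\<bar>a\<bar> \<le> 1" using a1 a by simp
  moreover have "a \<noteq> 1" using an1 a by simp
  ultimately have a2: "-1 \<le> a" "a < 1" by auto
  have d0: "1 - a \<noteq> 0" "1 - a > 0" using a2 by auto
  have mur: "\<mu> = real_of_int (m - 1) - 2 * real_of_int m / (1 - a)"
  proof -
    have "complex_of_real \<mu> = complex_of_real (real_of_int (m - 1) - 2 * real_of_int m / (1 - a))"
      using mu a by simp
    thus ?thesis by (simp only: of_real_eq_iff)
  qed
  have musr: "\<mu>s = real_of_int ns + 2 * a * real_of_int m / (1 - a)"
  proof -
    have "complex_of_real \<mu>s = complex_of_real (real_of_int ns + 2 * a * real_of_int m / (1 - a))"
      using mus a by simp
    thus ?thesis by (simp only: of_real_eq_iff)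
  qed
  have mr: "real_of_int m \<ge> 1" using m1 by simp
  have g1: "\<mu> = - (1 + a) / (1 - a) * real_of_int m - 1"
    unfolding mur using d0 by (simp add: field_simps)
  have g2: "a = (1 + \<mu> + m) / (1 + \<mu> - m)"
  proof -
    have "1 + \<mu> - m = - 2 * m / (1 - a)" unfolding mur using d0 by (simp add: field_simps)
    moreover have "1 + \<mu> + m = - 2 * a * m / (1 - a)" unfolding mur using d0 by (simp add: field_simps)
    ultimately have "(1 + \<mu> + m) / (1 + \<mu> - m) = (- 2 * a * m / (1 - a)) / (- 2 * m / (1 - a))"
      by simp
    also have "\<dots> = a" using d0 mr by (simp add: field_simps)
    finally show ?thesis by simp
  qed
  have g3: "\<mu> \<le> -1"
  proof -
    have "(1 + a) / (1 - a) * real_of_int m \<ge> 0" using a2 mr by simp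
    moreover have "- (1 + a) / (1 - a) * real_of_int m = - ((1 + a) / (1 - a) * real_of_int m)" using d0 by (simp add: field_simps)
    ultimately show ?thesis using g1 by linarith
  qed
  have h: "2 * a * real_of_int m / (1 - a) = 2 * real_of_int m / (1 - a) - 2 * real_of_int m"
    using d0 by (simp add: field_simps)
  have g4: "\<mu> + \<mu>s = real_of_int ns - m - 1"
    using mur musr h by simp
  have g5: "\<mu>s \<ge> -1"
  proof (cases "a = 0")
    case True
    then show ?thesis unfolding musr using ns m1 by simp
  next
    case False
    hence "ns = m - 1" using ns2 a by simp
    hence nsr: "real_of_int ns = real_of_int m - 1" by simp
    have "\<mu>s = (1 + a) / (1 - a) * real_of_int m - 1"
      unfolding musr nsr using d0 by (simp add: field_simps)
    moreover have "(1 + a) / (1 - a) * real_of_int m \<ge> 0" using a2 mr by simp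
    ultimately show ?thesis by simp
  qed
  show ?thesis
  proof (intro conjI)
    show "complex_of_real \<mu> = - (1 + \<alpha>) / (1 - \<alpha>) * of_int m - 1"
      unfolding a by (subst g1) simp
    show "\<alpha> = complex_of_real ((1 + \<mu> + m) / (1 + \<mu> - m))" unfolding a using g2 by simp
    show "\<mu> \<le> -1" by fact
    show "\<mu> + \<mu>s \<ge> -2" using g4 ns by simp
    show "\<mu>s \<ge> -1" by fact
  qed
qed

lemma isCont_holo_cball:
  assumes "h holomorphic_on cball 0 r" "r > 0"
  shows "(h \<longlongrightarrow> h 0) (at 0)"
proof -
  have "h holomorphic_on ball 0 r" using assms(1) by (rule holomorphic_on_subset) auto
  hence "continuous_on (ball 0 r) h" by (rule holomorphic_on_imp_continuous_on)
  hence "isCont h 0" using assms(2) by (simp add: continuous_on_eq_continuous_at)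
  thus ?thesis by (simp add: isCont_def)
qed

lemma partB:
  fixes G Gs om1 th1 :: "complex \<Rightarrow> complex" and \<mu> \<mu>s :: real and m :: int and \<alpha> :: complex
    and r :: real
  assumes r: "r > 0" "r \<le> 1"
    and Gh: "G holomorphic_on ball 0 r - {0}" and Gsh: "Gs holomorphic_on ball 0 r - {0}"
    and G_iso: "isolated_singularity_at G 0" and G_ness: "not_essential G 0"
    and Gs_iso: "isolated_singularity_at Gs 0" and Gs_ness: "not_essential Gs 0"
    and G_np: "\<not> is_pole G 0"
    and om1_holo: "om1 holomorphic_on ball 0 1" and om1_0: "om1 0 \<noteq> 0"
    and th1_holo: "th1 holomorphic_on ball 0 1" and th1_0: "th1 0 \<noteq> 0"
    and Q: "\<forall>z\<in>ball 0 r - {0}. deriv G z \<noteq> 0 \<and> deriv Gs z \<noteq> 0 \<and> G z - Gs z \<noteq> 0 \<and>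
        om1 z \<noteq> 0 \<and> th1 z \<noteq> 0 \<and>
        z * deriv G z / (G z - Gs z) =
          (z * deriv (deriv G) z / deriv G z - z * deriv om1 z / om1 z - of_real \<mu>) / 2 \<and>
        z * deriv Gs z / (G z - Gs z) =
          (of_real \<mu>s + z * deriv th1 z / th1 z - z * deriv (deriv Gs) z / deriv Gs z) / 2"
    and mult: "m = end_multiplicity G Gs"
    and dominant: "\<not> locally_constant_at_zero G"
          "((\<lambda>z. deriv Gs z / deriv G z) \<longlongrightarrow> \<alpha>) (at 0)" "cmod \<alpha> \<le> 1"
    and inc: "\<mu> \<ge> 0 \<Longrightarrow> \<mu>s \<ge> 0 \<Longrightarrow> False"
  shows "complex_of_real \<mu> = - (1 + \<alpha>) / (1 - \<alpha>) * of_int m - 1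
         \<and> \<alpha> = complex_of_real ((1 + \<mu> + m) / (1 + \<mu> - m))
         \<and> \<mu> \<le> -1 \<and> \<mu> + \<mu>s \<ge> -2 \<and> \<mu>s \<ge> -1"
proof -
  define P where "P = ball (0::complex) r - {0}"
  have Popen: "open P" unfolding P_def by auto
  have evP: "\<forall>\<^sub>F z in at (0::complex). z \<in> P"
    unfolding P_def eventually_at using r by (intro exI[of _ r]) (auto simp: dist_norm)
  have QP: "\<And>z. z \<in> P \<Longrightarrow> deriv G z \<noteq> 0 \<and> deriv Gs z \<noteq> 0 \<and> G z - Gs z \<noteq> 0 \<and>
        om1 z \<noteq> 0 \<and> th1 z \<noteq> 0 \<and>
        z * deriv G z / (G z - Gs z) =
          (z * deriv (deriv G) z / deriv G z - z * deriv om1 z / om1 z - of_real \<mu>) / 2 \<and>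
        z * deriv Gs z / (G z - Gs z) =
          (of_real \<mu>s + z * deriv th1 z / th1 z - z * deriv (deriv Gs) z / deriv Gs z) / 2"
    using Q unfolding P_def by blast
  have Q1P: "\<And>z. z \<in> P \<Longrightarrow> z * deriv G z / (G z - Gs z) =
          (z * deriv (deriv G) z / deriv G z - z * deriv om1 z / om1 z - of_real \<mu>) / 2"
    using QP[THEN conjunct2, THEN conjunct2, THEN conjunct2, THEN conjunct2, THEN conjunct2, THEN conjunct1] .
  have Q2P: "\<And>z. z \<in> P \<Longrightarrow> z * deriv Gs z / (G z - Gs z) =
          (of_real \<mu>s + z * deriv th1 z / th1 z - z * deriv (deriv Gs) z / deriv Gs z) / 2"
    using QP[THEN conjunct2, THEN conjunct2, THEN conjunct2, THEN conjunct2, THEN conjunct2, THEN conjunct2] .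
  have evg: "\<forall>\<^sub>F z in at 0. deriv G z \<noteq> 0" using evP by eventually_elim (use QP in blast)
  have evgs: "\<forall>\<^sub>F z in at 0. deriv Gs z \<noteq> 0" using evP by eventually_elim (use QP in blast)
  have evD: "\<forall>\<^sub>F z in at 0. G z - Gs z \<noteq> 0" using evP by eventually_elim (use QP in blast)
  have g_iso: "isolated_singularity_at (deriv G) 0" by (rule isolated_singularity_at_deriv[OF G_iso])
  have g_ness: "not_essential (deriv G) 0" by (rule not_essential_deriv[OF G_ness G_iso])
  have gs_iso: "isolated_singularity_at (deriv Gs) 0" by (rule isolated_singularity_at_deriv[OF Gs_iso])
  have gs_ness: "not_essential (deriv Gs) 0" by (rule not_essential_deriv[OF Gs_ness Gs_iso])
  have "(\<lambda>w. G w - Gs w) meromorphic_on {0}"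
    using G_iso G_ness Gs_iso Gs_ness by (intro meromorphic_on_diff) (auto simp: meromorphic_at_iff)
  hence D_iso: "isolated_singularity_at (\<lambda>w. G w - Gs w) 0" and D_ness: "not_essential (\<lambda>w. G w - Gs w) 0"
    by (auto simp: meromorphic_at_iff)
  define n where "n = zorder (deriv G) 0"
  define ns where "ns = zorder (deriv Gs) 0"
  define k where "k = zorder (\<lambda>w. G w - Gs w) 0"
  obtain ru u where u: "ru > 0" "u holomorphic_on cball 0 ru" "u 0 \<noteq> 0"
    "\<And>w. w \<in> cball 0 ru - {0} \<Longrightarrow> deriv G w = u w * w powi n \<and> u w \<noteq> 0"
    by (rule rep0[OF g_iso g_ness eventually_frequently[OF at_neq_bot evg], folded n_def]) (rule that)
  obtain rs us where us: "rs > 0" "us holomorphic_on cball 0 rs" "us 0 \<noteq> 0"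
    "\<And>w. w \<in> cball 0 rs - {0} \<Longrightarrow> deriv Gs w = us w * w powi ns \<and> us w \<noteq> 0"
    by (rule rep0[OF gs_iso gs_ness eventually_frequently[OF at_neq_bot evgs], folded ns_def]) (rule that)
  obtain rv v where v: "rv > 0" "v holomorphic_on cball 0 rv" "v 0 \<noteq> 0"
    "\<And>w. w \<in> cball 0 rv - {0} \<Longrightarrow> G w - Gs w = v w * w powi k \<and> v w \<noteq> 0"
    by (rule rep0[OF D_iso D_ness eventually_frequently[OF at_neq_bot evD], folded k_def]) (rule that)
  have evu: "\<forall>\<^sub>F z in at (0::complex). z \<in> cball 0 ru - {0}"
    unfolding eventually_at using u(1) by (intro exI[of _ ru]) (auto simp: dist_norm)
  have evus: "\<forall>\<^sub>F z in at (0::complex). z \<in> cball 0 rs - {0}"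
    unfolding eventually_at using us(1) by (intro exI[of _ rs]) (auto simp: dist_norm)
  have evv: "\<forall>\<^sub>F z in at (0::complex). z \<in> cball 0 rv - {0}"
    unfolding eventually_at using v(1) by (intro exI[of _ rv]) (auto simp: dist_norm)
  have lu: "(u \<longlongrightarrow> u 0) (at 0)" by (rule isCont_holo_cball[OF u(2,1)])
  have lus: "(us \<longlongrightarrow> us 0) (at 0)" by (rule isCont_holo_cball[OF us(2,1)])
  have lv: "(v \<longlongrightarrow> v 0) (at 0)" by (rule isCont_holo_cball[OF v(2,1)])
  have lg: "((\<lambda>z. z * deriv (deriv G) z / deriv G z) \<longlongrightarrow> of_int n) (at 0)"
    by (rule logderiv_lim[OF u(1-3)]) (use u(4) in blast)
  have lgs: "((\<lambda>z. z * deriv (deriv Gs) z / deriv Gs z) \<longlongrightarrow> of_int ns) (at 0)"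
    by (rule logderiv_lim[OF us(1-3)]) (use us(4) in blast)
  have lD: "((\<lambda>z. z * deriv (\<lambda>w. G w - Gs w) z / (G z - Gs z)) \<longlongrightarrow> of_int k) (at 0)"
    by (rule logderiv_lim[OF v(1-3), of "\<lambda>w. G w - Gs w"]) (use v(4) in blast)
  have r2: "r / 2 > 0" using r by simp
  have lo: "((\<lambda>z. z * deriv om1 z / om1 z) \<longlongrightarrow> of_int 0) (at 0)"
  proof (rule logderiv_lim[OF r2])
    show "om1 holomorphic_on cball 0 (r / 2)" by (rule holomorphic_on_subset[OF om1_holo]) (use r in auto)
    show "om1 0 \<noteq> 0" by fact
    fix w :: complex assume "w \<in> cball 0 (r / 2) - {0}"
    hence "w \<in> P" unfolding P_def using r by auto
    thus "om1 w = om1 w * w powi 0 \<and> om1 w \<noteq> 0" using QP by simp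
  qed
  have lt: "((\<lambda>z. z * deriv th1 z / th1 z) \<longlongrightarrow> of_int 0) (at 0)"
  proof (rule logderiv_lim[OF r2])
    show "th1 holomorphic_on cball 0 (r / 2)" by (rule holomorphic_on_subset[OF th1_holo]) (use r in auto)
    show "th1 0 \<noteq> 0" by fact
    fix w :: complex assume "w \<in> cball 0 (r / 2) - {0}"
    hence "w \<in> P" unfolding P_def using r by auto
    thus "th1 w = th1 w * w powi 0 \<and> th1 w \<noteq> 0" using QP by simp
  qed
  define L1 where "L1 = (of_int n - of_real \<mu>) / (2::complex)"
  define L2 where "L2 = (of_real \<mu>s - of_int ns) / (2::complex)"
  have lq: "((\<lambda>z. z * deriv G z / (G z - Gs z)) \<longlongrightarrow> L1) (at 0)"
  proof -
    have "((\<lambda>z. (z * deriv (deriv G) z / deriv G z - z * deriv om1 z / om1 z - of_real \<mu>) / 2)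
        \<longlongrightarrow> (of_int n - of_int 0 - of_real \<mu>) / 2) (at 0)"
      by (intro tendsto_intros lg lo) auto
    moreover have "\<forall>\<^sub>F z in at 0. (z * deriv (deriv G) z / deriv G z - z * deriv om1 z / om1 z - of_real \<mu>) / 2
        = z * deriv G z / (G z - Gs z)"
      using evP by eventually_elim (simp add: Q1P)
    ultimately show ?thesis unfolding L1_def by (simp add: Lim_transform_eventually)
  qed
  have lqs: "((\<lambda>z. z * deriv Gs z / (G z - Gs z)) \<longlongrightarrow> L2) (at 0)"
  proof -
    have "((\<lambda>z. (of_real \<mu>s + z * deriv th1 z / th1 z - z * deriv (deriv Gs) z / deriv Gs z) / 2)
        \<longlongrightarrow> (of_real \<mu>s + of_int 0 - of_int ns) / 2) (at 0)"
      by (intro tendsto_intros lgs lt) auto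
    moreover have "\<forall>\<^sub>F z in at 0. (of_real \<mu>s + z * deriv th1 z / th1 z - z * deriv (deriv Gs) z / deriv Gs z) / 2
        = z * deriv Gs z / (G z - Gs z)"
      using evP by eventually_elim (simp add: Q2P)
    ultimately show ?thesis unfolding L2_def by (simp add: Lim_transform_eventually)
  qed
  have L2a: "L2 = \<alpha> * L1"
  proof -
    have "((\<lambda>z. deriv Gs z / deriv G z * (z * deriv G z / (G z - Gs z))) \<longlongrightarrow> \<alpha> * L1) (at 0)"
      by (intro tendsto_intros dominant(2) lq)
    moreover have "\<forall>\<^sub>F z in at 0. deriv Gs z / deriv G z * (z * deriv G z / (G z - Gs z))
        = z * deriv Gs z / (G z - Gs z)"
      using evg by eventually_elim (simp add: field_simps)
    ultimately have "((\<lambda>z. z * deriv Gs z / (G z - Gs z)) \<longlongrightarrow> \<alpha> * L1) (at 0)"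
      by (rule Lim_transform_eventually)
    thus ?thesis using lqs by (metis at_neq_bot tendsto_unique)
  qed
  have kL: "of_int k = L1 - L2"
  proof -
    have "((\<lambda>z. z * deriv G z / (G z - Gs z) - z * deriv Gs z / (G z - Gs z)) \<longlongrightarrow> L1 - L2) (at 0)"
      by (intro tendsto_intros lq lqs)
    moreover have "\<forall>\<^sub>F z in at 0. z * deriv G z / (G z - Gs z) - z * deriv Gs z / (G z - Gs z)
        = z * deriv (\<lambda>w. G w - Gs w) z / (G z - Gs z)"
      using evP
    proof eventually_elim
      case (elim z)
      have "G field_differentiable at z" "Gs field_differentiable at z"
        using Gh Gsh elim Popen unfolding P_def
        by (auto intro: holomorphic_on_imp_differentiable_at)
      hence "deriv (\<lambda>w. G w - Gs w) z = deriv G z - deriv Gs z" by simp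
      thus ?case by (simp add: diff_divide_distrib right_diff_distrib)
    qed
    ultimately have "((\<lambda>z. z * deriv (\<lambda>w. G w - Gs w) z / (G z - Gs z)) \<longlongrightarrow> L1 - L2) (at 0)"
      by (rule Lim_transform_eventually)
    thus ?thesis using lD by (metis at_neq_bot tendsto_unique)
  qed
  obtain c where "(G \<longlongrightarrow> c) (at 0)" using G_ness G_np unfolding not_essential_def by blast
  then obtain c' where c': "(deriv G \<longlongrightarrow> c') (at 0)" using removable_singularity_deriv[OF _ G_iso] by blast
  have n0: "n \<ge> 0"
  proof (rule powi_limit(1)[OF c' _ lu u(3)])
    show "\<forall>\<^sub>F z in at 0. deriv G z = z powi n * u z"
      using evu by eventually_elim (use u(4) in \<open>simp add: mult.commute\<close>)
  qed
  have ratio_ev: "\<forall>\<^sub>F z in at 0. deriv Gs z / deriv G z = z powi (ns - n) * (us z / u z)"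
    using evu evus
  proof eventually_elim
    case (elim z)
    have z0: "z \<noteq> 0" using elim by auto
    have "deriv Gs z / deriv G z = (us z * z powi ns) / (u z * z powi n)" using u(4) us(4) elim by simp
    also have "\<dots> = (z powi ns / z powi n) * (us z / u z)" by (simp add: field_simps)
    also have "\<dots> = z powi (ns - n) * (us z / u z)" using z0 by (simp add: power_int_diff)
    finally show ?case .
  qed
  have lusu: "((\<lambda>z. us z / u z) \<longlongrightarrow> us 0 / u 0) (at 0)" by (intro tendsto_intros lus lu u(3))
  have nsn: "ns - n \<ge> 0" by (rule powi_limit(1)[OF dominant(2) ratio_ev lusu]) (use us(3) u(3) in simp)
  have nsn2: "ns - n > 0 \<Longrightarrow> \<alpha> = 0" by (rule powi_limit(2)[OF dominant(2) ratio_ev lusu]) (use us(3) u(3) in simp)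
  have q_ev: "\<forall>\<^sub>F z in at 0. z * deriv G z / (G z - Gs z) = z powi (n + 1 - k) * (u z / v z)"
    using evu evv
  proof eventually_elim
    case (elim z)
    have z0: "z \<noteq> 0" using elim by auto
    have "z * deriv G z / (G z - Gs z) = z * (u z * z powi n) / (v z * z powi k)" using u(4) v(4) elim by simp
    also have "\<dots> = ((z * z powi n) / z powi k) * (u z / v z)" by (simp add: field_simps)
    also have "z * z powi n = z powi (n + 1)" using z0 by (simp add: power_int_add_1')
    also have "z powi (n + 1) / z powi k = z powi (n + 1 - k)" using z0 by (simp add: power_int_diff)
    finally show ?case .
  qed
  have luv: "((\<lambda>z. u z / v z) \<longlongrightarrow> u 0 / v 0) (at 0)" by (intro tendsto_intros lv lu v(3))
  have uv0: "u 0 / v 0 \<noteq> 0" using u(3) v(3) by simp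
  have e0: "n + 1 - k \<ge> 0" by (rule powi_limit(1)[OF lq q_ev luv uv0])
  have e1: "n + 1 - k > 0 \<Longrightarrow> L1 = 0" by (rule powi_limit(2)[OF lq q_ev luv uv0])
  have e2: "n + 1 - k = 0 \<Longrightarrow> L1 = u 0 / v 0" by (rule powi_limit(3)[OF lq q_ev luv uv0])
  show ?thesis
  proof (cases "n + 1 - k > 0")
    case True
    have "L1 = 0" using e1 True .
    hence mu: "complex_of_real \<mu> = of_int n" unfolding L1_def by simp
    hence "\<mu> = real_of_int n" by (metis of_real_eq_iff of_real_of_int_eq)
    hence "\<mu> \<ge> 0" using n0 by simp
    moreover have "L2 = 0" using L2a \<open>L1 = 0\<close> by simp
    hence "complex_of_real \<mu>s = of_int ns" unfolding L2_def by simp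
    hence "\<mu>s = real_of_int ns" by (metis of_real_eq_iff of_real_of_int_eq)
    hence "\<mu>s \<ge> 0" using n0 nsn by simp
    ultimately show ?thesis using inc by blast
  next
    case False
    hence kn: "k = n + 1" using e0 by simp
    have L1nz: "L1 \<noteq> 0" using e2 kn uv0 by simp
    have kL': "of_int k = (1 - \<alpha>) * L1" using kL L2a by (simp add: algebra_simps)
    have "k \<noteq> 0" using kn n0 by simp
    hence k0: "(of_int k :: complex) \<noteq> 0" by simp
    have an1: "\<alpha> \<noteq> 1" using kL' k0 by auto
    have L1v: "L1 = of_int (n + 1) / (1 - \<alpha>)" using kL' kn an1 by (simp add: field_simps)
    have nlc: "\<not> locally_constant_at_zero Gs"
    proof
      assume "locally_constant_at_zero Gs"
      hence "\<forall>\<^sub>F z in at 0. deriv Gs z = 0" unfolding locally_constant_at_zero_def .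
      with evgs have "\<forall>\<^sub>F z in at (0::complex). False" by eventually_elim auto
      thus False by (simp add: eventually_False)
    qed
    have m_eq: "m = n + 1"
      unfolding mult end_multiplicity_def using dominant(1) nlc nsn
      by (simp add: n_def ns_def)
    have mu: "complex_of_real \<mu> = of_int (m - 1) - 2 * of_int m / (1 - \<alpha>)"
    proof -
      have "complex_of_real \<mu> = of_int n - 2 * L1" unfolding L1_def by (simp add: field_simps)
      thus ?thesis unfolding L1v m_eq by simp
    qed
    have mus: "complex_of_real \<mu>s = of_int ns + 2 * \<alpha> * of_int m / (1 - \<alpha>)"
    proof -
      have "complex_of_real \<mu>s = of_int ns + 2 * L2" unfolding L2_def by (simp add: field_simps)
      thus ?thesis unfolding L2a L1v m_eq by simp
    qed
    show ?thesis
    proof (rule final_arith[OF _ dominant(3) an1 mu mus])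
      show "m \<ge> 1" using m_eq n0 by simp
      show "ns \<ge> m - 1" using m_eq nsn by simp
      show "ns = m - 1" if "\<alpha> \<noteq> 0" using nsn nsn2 that m_eq by force
    qed
  qed
qed

theorem proposition1p15:
  fixes E :: "complex \<Rightarrow> complex^2^2"
    and om th :: "complex \<Rightarrow> complex"
    and G Gs :: "complex \<Rightarrow> complex"
    and om1 th1 :: "complex \<Rightarrow> complex"
    and \<mu> \<mu>s :: real
    and m :: int
    and \<alpha> :: complex
  assumes E_holo: "\<And>i j. (\<lambda>w. E w $ i $ j) holomorphic_on left_halfplane"
    and E_SL2: "\<And>w. w \<in> left_halfplane \<Longrightarrow> det (E w) = 1"
    and E_canonical: "\<And>w i j. w \<in> left_halfplane \<Longrightarrow>
          ((\<lambda>v. E v $ i $ j) has_field_derivative ((E w ** canon_mat (om w) (th w)) $ i $ j)) (at w)"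
    and f_single_valued: "\<And>w. w \<in> left_halfplane \<Longrightarrow>
          E (w + 2 * pi * \<i>) ** adj2 (E (w + 2 * pi * \<i>)) = E w ** adj2 (E w)"
    and front: "\<And>w. w \<in> left_halfplane \<Longrightarrow> om w \<noteq> 0 \<or> th w \<noteq> 0"
    and G_def: "\<And>w. w \<in> left_halfplane \<Longrightarrow> G (exp w) = E w $ 1 $ 1 / E w $ 2 $ 1"
    and Gs_def: "\<And>w. w \<in> left_halfplane \<Longrightarrow> Gs (exp w) = E w $ 1 $ 2 / E w $ 2 $ 2"
    and complete: "complete_at_zero (metric_density om th)"
    and finite_curv: "finite_total_curvature_at_zero (metric_density om th)"
    and om1_holo: "om1 holomorphic_on ball 0 1" and om1_0: "om1 0 \<noteq> 0"
    and th1_holo: "th1 holomorphic_on ball 0 1" and th1_0: "th1 0 \<noteq> 0"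
    and om_form: "\<And>w. w \<in> left_halfplane \<Longrightarrow> om w = exp (of_real \<mu> * w) * om1 (exp w) * exp w"
    and th_form: "\<And>w. w \<in> left_halfplane \<Longrightarrow> th w = exp (of_real \<mu>s * w) * th1 (exp w) * exp w"
    and G_regular: "isolated_singularity_at G 0" "not_essential G 0"
    and Gs_regular: "isolated_singularity_at Gs 0" "not_essential Gs 0"
    and G_normalised: "\<not> is_pole G 0"
    and mult: "m = end_multiplicity G Gs"
    and dominant: "\<not> locally_constant_at_zero G"
          "((\<lambda>z. deriv Gs z / deriv G z) \<longlongrightarrow> \<alpha>) (at 0)" "cmod \<alpha> \<le> 1"
  shows "complex_of_real \<mu> = - (1 + \<alpha>) / (1 - \<alpha>) * of_int m - 1
         \<and> \<alpha> = complex_of_real ((1 + \<mu> + m) / (1 + \<mu> - m))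
         \<and> \<mu> \<le> -1 \<and> \<mu> + \<mu>s \<ge> -2 \<and> \<mu>s \<ge> -1"
proof -
  have ex: "\<exists>r>0. r \<le> 1 \<and> G holomorphic_on ball 0 r - {0} \<and> Gs holomorphic_on ball 0 r - {0} \<and>
     (\<forall>z\<in>ball 0 r - {0}. deriv G z \<noteq> 0 \<and> deriv Gs z \<noteq> 0 \<and> G z - Gs z \<noteq> 0 \<and>
        om1 z \<noteq> 0 \<and> th1 z \<noteq> 0 \<and>
        z * deriv G z / (G z - Gs z) =
          (z * deriv (deriv G) z / deriv G z - z * deriv om1 z / om1 z - of_real \<mu>) / 2 \<and>
        z * deriv Gs z / (G z - Gs z) =
          (of_real \<mu>s + z * deriv th1 z / th1 z - z * deriv (deriv Gs) z / deriv Gs z) / 2)"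
    by (rule partA[OF E_canonical E_SL2 G_def Gs_def om1_holo om1_0 th1_holo th1_0 om_form th_form
        G_regular(1) Gs_regular(1)])
  have inc: False if "\<mu> \<ge> 0" "\<mu>s \<ge> 0"
    using incomplete[OF that om1_holo th1_holo om_form th_form] complete by simp
  from ex obtain r where r: "r > 0 \<and> (r \<le> 1 \<and> G holomorphic_on ball 0 r - {0} \<and> Gs holomorphic_on ball 0 r - {0} \<and>
     (\<forall>z\<in>ball 0 r - {0}. deriv G z \<noteq> 0 \<and> deriv Gs z \<noteq> 0 \<and> G z - Gs z \<noteq> 0 \<and>
        om1 z \<noteq> 0 \<and> th1 z \<noteq> 0 \<and>
        z * deriv G z / (G z - Gs z) =
          (z * deriv (deriv G) z / deriv G z - z * deriv om1 z / om1 z - of_real \<mu>) / 2 \<and>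
        z * deriv Gs z / (G z - Gs z) =
          (of_real \<mu>s + z * deriv th1 z / th1 z - z * deriv (deriv Gs) z / deriv Gs z) / 2))"
    by (elim exE) (rule that)
  note r1 = r[THEN conjunct1] and r2 = r[THEN conjunct2, THEN conjunct1]
    and r3 = r[THEN conjunct2, THEN conjunct2, THEN conjunct1]
    and r4 = r[THEN conjunct2, THEN conjunct2, THEN conjunct2, THEN conjunct1]
    and Q = r[THEN conjunct2, THEN conjunct2, THEN conjunct2, THEN conjunct2]
  show ?thesis
    by (rule partB[OF r1 r2 r3 r4 G_regular Gs_regular G_normalised om1_holo om1_0 th1_holo th1_0 Q
        mult dominant inc])
qed

end
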